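(* Let $X$ be a compact metric space, $G$ a countable infinite discrete amenable group acting continuously on $X$, and suppose $(X,G)$ has the $g$-almost product property with associated map $m$. Let $x_1,\dots,x_k\in X$, $\varepsilon_1,\dots,\varepsilon_k\in(0,1)$, and pairwise disjoint $F_1,\dots,F_k\in F(G)$ with each $F_j$ being $m(\varepsilon_j)$-invariant. Let $F=\bigcup_{j=1}^kF_j$. Suppose $\mu_1,\dots,\mu_k\in M(X)$ and $\xi_1,\dots,\xi_k>0$ satisfy $\mathcal E_{F_j}(x_j)\in B(\mu_j,\xi_j)$ for $j=1,\dots,k$. Then for every $y\in\bigcap_{j=1}^kB(g;F_j,x_j,\varepsilon_j)$ and every probability measure $\alpha\in M(X)$, \[ D(\mathcal E_F(y),\alpha)\le\sum_{j=1}^k\frac{|F_j|}{|F|}\big(D(\mu_j,\alpha)+\xi_j+\varepsilon_j+g(\varepsilon_j)\big). \]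
   Context: $M(X)$ is the space of Borel probability measures on $X$. $F(G)$ denotes finite subsets of $G$; for $K,F\in F(G)$, $\partial_K(F)=\{c\in G: Kc\cap F\ne\emptyset,\ Kc\cap(G\setminus F)\ne\emptyset\}$ and $F$ is $(K,\delta)$-invariant if $|\partial_K(F)|/|F|<\delta$; "$m(\varepsilon)$-invariant" means $(K,\delta)$-invariant where $m(\varepsilon)=(K,\delta)$. Fix a countable separating family $\{\varphi_i\}$ of continuous functions with $0\le\varphi_i\le1$; $D(\mu,\nu)=\sum_i2^{-i}|\int\varphi_id\mu-\int\varphi_id\nu|$; $B(\mu,\xi)=\{\nu\in M(X):D(\mu,\nu)<\xi\}$; the metric on $X$ is $\rho(x,y)=D(\delta_x,\delta_y)$. $\mathcal E_F(x)=\frac1{|F|}\sum_{s\in F}\delta_{sx}$. $g$-almost product property: $g:(0,1)\to(0,1)$ nondecreasing with $\lim_{r\to0}g(r)=0$; $B(g;F,x,\varepsilon)=\{y: |\{s\in F:\rho(sx,sy)>\varepsilon\}|\le g(\varepsilon)|F|\}$; the property holds with map $m:(0,1)\to F(G)\times(0,1)$ if for all $k$, $\varepsilon_i$, $x_i$ and pairwise disjoint $F_i\in F(G)$ with $F_i$ being $m(\varepsilon_i)$-invariant, $\bigcap_iB(g;F_i,x_i,\varepsilon_i)\ne\emptyset$. *)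

theory Defs
  imports "HOL-Probability.Probability"
begin

text \<open>Groups are written additively (class group_add, not necessarily commutative);
  the product k c of the paper is k + c.\<close>

definition right_translate :: "'g::group_add set \<Rightarrow> 'g \<Rightarrow> 'g set" where
  "right_translate K c = (\<lambda>k. k + c) ` K"

definition bdry :: "'g::group_add set \<Rightarrow> 'g set \<Rightarrow> 'g set" where
  "bdry K F = {c. right_translate K c \<inter> F \<noteq> {} \<and> right_translate K c \<inter> (UNIV - F) \<noteq> {}}"

definition invariant :: "'g::group_add set \<Rightarrow> real \<Rightarrow> 'g set \<Rightarrow> bool" where
  "invariant K \<delta> F \<longleftrightarrow> real (card (bdry K F)) / real (card F) < \<delta>"

definition amenable_group :: "'g::group_add itself \<Rightarrow> bool" where
  "amenable_group _ \<longleftrightarrow> (\<exists>F :: nat \<Rightarrow> 'g set. (\<forall>n. finite (F n) \<and> F n \<noteq> {}) \<and>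
     (\<forall>g. (\<lambda>n. real (card (((\<lambda>s. g + s) ` F n) - F n \<union> (F n - (\<lambda>s. g + s) ` F n)))
               / real (card (F n))) \<longlonglongrightarrow> 0))"

definition probM :: "'x::topological_space measure \<Rightarrow> bool" where
  "probM \<mu> \<longleftrightarrow> prob_space \<mu> \<and> sets \<mu> = sets borel"

definition Dm :: "(nat \<Rightarrow> 'x::topological_space \<Rightarrow> real) \<Rightarrow> 'x measure \<Rightarrow> 'x measure \<Rightarrow> real" where
  "Dm \<phi> \<mu> \<nu> = (\<Sum>i. (1/2) ^ Suc i * \<bar>(\<integral>x. \<phi> i x \<partial>\<mu>) - (\<integral>x. \<phi> i x \<partial>\<nu>)\<bar>)"

definition Bm :: "(nat \<Rightarrow> 'x::topological_space \<Rightarrow> real) \<Rightarrow> 'x measure \<Rightarrow> real \<Rightarrow> 'x measure set" where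
  "Bm \<phi> \<mu> \<xi> = {\<nu>. probM \<nu> \<and> Dm \<phi> \<mu> \<nu> < \<xi>}"

definition rho :: "(nat \<Rightarrow> 'x::topological_space \<Rightarrow> real) \<Rightarrow> 'x \<Rightarrow> 'x \<Rightarrow> real" where
  "rho \<phi> x y = Dm \<phi> (return borel x) (return borel y)"

definition emp :: "('g \<Rightarrow> 'x::topological_space \<Rightarrow> 'x) \<Rightarrow> 'g set \<Rightarrow> 'x \<Rightarrow> 'x measure" where
  "emp act F x = measure_of UNIV (sets borel)
     (\<lambda>A. ennreal ((\<Sum>s\<in>F. indicator A (act s x)) / real (card F)))"

definition Bg :: "(nat \<Rightarrow> 'x::topological_space \<Rightarrow> real) \<Rightarrow> ('g \<Rightarrow> 'x \<Rightarrow> 'x) \<Rightarrow> (real \<Rightarrow> real)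
    \<Rightarrow> 'g set \<Rightarrow> 'x \<Rightarrow> real \<Rightarrow> 'x set" where
  "Bg \<phi> act g F x \<epsilon> = {y. real (card {s\<in>F. rho \<phi> (act s x) (act s y) > \<epsilon>}) \<le> g \<epsilon> * real (card F)}"

definition admissible_g :: "(real \<Rightarrow> real) \<Rightarrow> bool" where
  "admissible_g g \<longleftrightarrow> (\<forall>r\<in>{0<..<1}. g r \<in> {0<..<1}) \<and> mono_on {0<..<1} g \<and> (g \<longlongrightarrow> 0) (at_right 0)"

definition admissible_m :: "(real \<Rightarrow> 'g set \<times> real) \<Rightarrow> bool" where
  "admissible_m m \<longleftrightarrow> (\<forall>\<epsilon>\<in>{0<..<1}. finite (fst (m \<epsilon>)) \<and> snd (m \<epsilon>) \<in> {0<..<1})"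

definition almost_product :: "(nat \<Rightarrow> 'x::topological_space \<Rightarrow> real) \<Rightarrow> ('g::group_add \<Rightarrow> 'x \<Rightarrow> 'x)
    \<Rightarrow> (real \<Rightarrow> real) \<Rightarrow> (real \<Rightarrow> 'g set \<times> real) \<Rightarrow> bool" where
  "almost_product \<phi> act g m \<longleftrightarrow> admissible_g g \<and> admissible_m m \<and>
     (\<forall>(k::nat) (\<epsilon>::nat \<Rightarrow> real) (x::nat \<Rightarrow> 'x) (F::nat \<Rightarrow> 'g set).
        (\<forall>i<k. \<epsilon> i \<in> {0<..<1} \<and> finite (F i) \<and> invariant (fst (m (\<epsilon> i))) (snd (m (\<epsilon> i))) (F i)) \<and>
        (\<forall>i<k. \<forall>j<k. i \<noteq> j \<longrightarrow> F i \<inter> F j = {})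
        \<longrightarrow> (\<Inter>i\<in>{..<k}. Bg \<phi> act g (F i) (x i) (\<epsilon> i)) \<noteq> {})"

end

theory Submission
  imports Defs
begin

lemma emp_eq_distr:
  fixes act :: "'g \<Rightarrow> 'x::topological_space \<Rightarrow> 'x"
  assumes "finite F" "F \<noteq> {}"
  shows "emp act F x = distr (measure_pmf (pmf_of_set F)) borel (\<lambda>s. act s x)"
proof -
  let ?M = "distr (measure_pmf (pmf_of_set F)) borel (\<lambda>s. act s x)"
  have "emp act F x = measure_of UNIV (sets borel) (emeasure ?M)"
    unfolding emp_def
  proof (rule measure_of_eq)
    show "sets borel \<subseteq> Pow UNIV" by simp
    fix A :: "'x set" assume "A \<in> sigma_sets UNIV (sets borel)"
    then have A: "A \<in> sets borel"
      by (metis sets.sigma_sets_eq space_borel)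
    have "emeasure ?M A = emeasure (measure_pmf (pmf_of_set F)) ((\<lambda>s. act s x) -` A)"
      using A by (simp add: emeasure_distr)
    also have "\<dots> = ennreal (card (F \<inter> (\<lambda>s. act s x) -` A) / card F)"
      using assms by (simp add: emeasure_pmf_of_set ennreal_of_nat_eq_real_of_nat divide_ennreal)
    finally have e: "emeasure ?M A = ennreal (card (F \<inter> (\<lambda>s. act s x) -` A) / card F)" .
    have "(\<Sum>s\<in>F. indicator A (act s x)) = real (card (F \<inter> (\<lambda>s. act s x) -` A))"
      using assms(1) by (simp add: indicator_def sum.If_cases Int_def)
    then show "ennreal ((\<Sum>s\<in>F. indicator A (act s x)) / real (card F)) = emeasure ?M A"
      using e by simp
  qed
  also have "\<dots> = ?M"
    using measure_of_of_measure[of ?M] by simp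
  finally show ?thesis .
qed

lemma emp_integral:
  assumes "finite F" "F \<noteq> {}" "f \<in> borel_measurable borel"
  shows "(\<integral>z. f z \<partial>emp act F x) = (\<Sum>s\<in>F. f (act s x)) / card F"
  using assms by (simp add: emp_eq_distr integral_distr integral_pmf_of_set)

lemma wsum_summable:
  fixes b :: "nat \<Rightarrow> real"
  assumes "\<And>i. \<bar>b i\<bar> \<le> C"
  shows "summable (\<lambda>i. (1/2::real)^Suc i * b i)"
proof (rule summable_comparison_test')
  show "summable (\<lambda>i. C * (1/2::real)^i)"
    by (intro summable_mult summable_geometric) simp
  fix n
  have "\<bar>b n\<bar> * (1/2)^Suc n \<le> C * (1/2)^Suc n"
    using assms by (intro mult_right_mono) auto
  also have "\<dots> \<le> C * (1/2)^n" using assms[of n] by (simp add: mult_left_mono)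
  finally show "norm ((1/2::real)^Suc n * b n) \<le> C * (1/2)^n"
    by (simp add: abs_mult mult.commute)
qed

lemma wsum_one: "(\<Sum>i. (1/2::real)^Suc i) = 1"
proof -
  have "(\<lambda>i. (1/2::real) * (1/2)^i) sums ((1/2) * (1 / (1 - 1/2)))"
    by (intro sums_mult geometric_sums) simp
  then show ?thesis by (simp add: sums_iff)
qed

lemma prob_int_bound:
  fixes f :: "'x::topological_space \<Rightarrow> real"
  assumes "probM \<mu>" "f \<in> borel_measurable borel" "\<And>z. 0 \<le> f z \<and> f z \<le> 1"
  shows "0 \<le> (\<integral>z. f z \<partial>\<mu>) \<and> (\<integral>z. f z \<partial>\<mu>) \<le> 1"
proof -
  interpret prob_space \<mu> using assms(1) unfolding probM_def by simp
  have m: "f \<in> borel_measurable \<mu>"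
  proof -
    have "sets \<mu> = sets borel" using assms(1) unfolding probM_def by simp
    then have "borel_measurable \<mu> = borel_measurable borel"
      by (intro measurable_cong_sets) auto
    then show ?thesis using assms(2) by blast
  qed
  have int: "integrable \<mu> f"
  proof -
    have ae: "AE z in \<mu>. norm (f z) \<le> 1" using assms(3) by (intro AE_I2) (auto simp: abs_le_iff)
    show ?thesis by (rule integrable_const_bound[OF ae m])
  qed
  have "(\<integral>z. f z \<partial>\<mu>) \<le> (\<integral>z. 1 \<partial>\<mu>)"
    using int assms(3) by (intro integral_mono) auto
  then show ?thesis using assms(3) by (simp add: integral_nonneg prob_space)
qed

lemma wsum_summable1: "summable (\<lambda>i. (1/2::real)^Suc i)"
  using wsum_summable[of "\<lambda>_. 1" 1] by simp

lemma rho_eq: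
  assumes "\<And>i. \<phi> i \<in> borel_measurable borel"
  shows "rho \<phi> a b = (\<Sum>i. (1/2::real)^Suc i * \<bar>\<phi> i a - \<phi> i b\<bar>)"
  unfolding rho_def Dm_def using assms by (simp add: integral_return)

lemma rho_bounds:
  assumes "\<And>i. \<phi> i \<in> borel_measurable borel" "\<And>i z. 0 \<le> \<phi> i z \<and> \<phi> i z \<le> 1"
  shows "0 \<le> rho \<phi> a b \<and> rho \<phi> a b \<le> 1"
proof -
  have b: "\<bar>\<phi> i a - \<phi> i b\<bar> \<le> 1" for i using assms(2)[of i a] assms(2)[of i b] by linarith
  have s: "summable (\<lambda>i. (1/2::real)^Suc i * \<bar>\<phi> i a - \<phi> i b\<bar>)"
    by (rule wsum_summable[where C=1]) (simp add: b)
  have "(\<Sum>i. (1/2::real)^Suc i * \<bar>\<phi> i a - \<phi> i b\<bar>) \<le> (\<Sum>i. (1/2::real)^Suc i)"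
    by (rule suminf_le) (use b s wsum_summable1 in \<open>auto intro!: mult_left_le\<close>)
  moreover have "0 \<le> (\<Sum>i. (1/2::real)^Suc i * \<bar>\<phi> i a - \<phi> i b\<bar>)"
    by (rule suminf_nonneg) (use s in auto)
  ultimately show ?thesis using wsum_one rho_eq[OF assms(1)] by simp
qed

lemma abs_diff01: "0 \<le> (a::real) \<Longrightarrow> a \<le> 1 \<Longrightarrow> 0 \<le> b \<Longrightarrow> b \<le> 1 \<Longrightarrow> \<bar>a - b\<bar> \<le> 1"
  by linarith

lemma avg01:
  fixes f :: "'a \<Rightarrow> real"
  assumes "finite F" "F \<noteq> {}" "\<And>s. 0 \<le> f s \<and> f s \<le> 1"
  shows "0 \<le> (\<Sum>s\<in>F. f s) / card F \<and> (\<Sum>s\<in>F. f s) / card F \<le> 1"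
proof -
  have "(\<Sum>s\<in>F. f s) \<le> of_nat (card F) * 1"
    by (rule sum_bounded_above) (use assms(3) in auto)
  moreover have "0 \<le> (\<Sum>s\<in>F. f s)" by (rule sum_nonneg) (use assms(3) in auto)
  moreover have "0 < card F" using assms by (simp add: card_gt_0_iff)
  ultimately show ?thesis by simp
qed

theorem mainTheorem3:
  fixes \<phi> :: "nat \<Rightarrow> 'x::metric_space \<Rightarrow> real"
    and act :: "'g::group_add \<Rightarrow> 'x \<Rightarrow> 'x"
    and g :: "real \<Rightarrow> real" and m :: "real \<Rightarrow> 'g set \<times> real"
    and k :: nat and x :: "nat \<Rightarrow> 'x" and \<epsilon> :: "nat \<Rightarrow> real"
    and F :: "nat \<Rightarrow> 'g set" and \<mu> :: "nat \<Rightarrow> 'x measure" and \<xi> :: "nat \<Rightarrow> real"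
    and y :: 'x and \<alpha> :: "'x measure"
  assumes compactX: "compact (UNIV :: 'x set)"
    and phi_cont: "\<And>i. continuous_on UNIV (\<phi> i)"
    and phi_range: "\<And>i z. 0 \<le> \<phi> i z \<and> \<phi> i z \<le> 1"
    and phi_sep: "\<And>z w. z \<noteq> w \<Longrightarrow> \<exists>i. \<phi> i z \<noteq> \<phi> i w"
    and rho_metric: "\<And>z w. dist z w = rho \<phi> z w"
    and G_countable: "countable (UNIV :: 'g set)"
    and G_infinite: "infinite (UNIV :: 'g set)"
    and G_amenable: "amenable_group TYPE('g)"
    and act_zero: "\<And>z. act 0 z = z"
    and act_add: "\<And>s t z. act (s + t) z = act s (act t z)"
    and act_cont: "\<And>s. continuous_on UNIV (act s)"
    and APP: "almost_product \<phi> act g m"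
    and k_pos: "0 < k"
    and eps: "\<And>j. j < k \<Longrightarrow> \<epsilon> j \<in> {0<..<1}"
    and F_fin: "\<And>j. j < k \<Longrightarrow> finite (F j) \<and> F j \<noteq> {}"
    and F_disj: "\<And>i j. i < k \<Longrightarrow> j < k \<Longrightarrow> i \<noteq> j \<Longrightarrow> F i \<inter> F j = {}"
    and F_inv: "\<And>j. j < k \<Longrightarrow> invariant (fst (m (\<epsilon> j))) (snd (m (\<epsilon> j))) (F j)"
    and mu_prob: "\<And>j. j < k \<Longrightarrow> probM (\<mu> j)"
    and xi_pos: "\<And>j. j < k \<Longrightarrow> \<xi> j > 0"
    and emp_close: "\<And>j. j < k \<Longrightarrow> emp act (F j) (x j) \<in> Bm \<phi> (\<mu> j) (\<xi> j)"
    and y_in: "y \<in> (\<Inter>j\<in>{..<k}. Bg \<phi> act g (F j) (x j) (\<epsilon> j))"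
    and alpha_prob: "probM \<alpha>"
  shows "Dm \<phi> (emp act (\<Union>j\<in>{..<k}. F j) y) \<alpha>
     \<le> (\<Sum>j<k. real (card (F j)) / real (card (\<Union>i\<in>{..<k}. F i))
            * (Dm \<phi> (\<mu> j) \<alpha> + \<xi> j + \<epsilon> j + g (\<epsilon> j)))"
proof -
  define w where "w i = (1/2::real)^Suc i" for i
  have phm: "\<And>i. \<phi> i \<in> borel_measurable borel"
    using phi_cont by (simp add: borel_measurable_continuous_onI)
  define Fu where "Fu = (\<Union>j\<in>{..<k}. F j)"
  define N where "N = card Fu"
  define n where "n j = card (F j)" for j
  have finFu: "finite Fu" using F_fin unfolding Fu_def by auto
  have N_eq0: "N = (\<Sum>j<k. n j)"
    unfolding N_def Fu_def n_def using F_fin F_disj by (subst card_UN_disjoint) auto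
  then have N_eq: "real N = (\<Sum>j<k. real (n j))" by simp
  have n_pos: "\<And>j. j < k \<Longrightarrow> 0 < n j" using F_fin by (simp add: n_def card_gt_0_iff)
  have Fu_ne: "Fu \<noteq> {}" using F_fin k_pos unfolding Fu_def by auto
  have N_pos: "0 < N" using finFu Fu_ne unfolding N_def by (simp add: card_gt_0_iff)
  define c where "c j = real (n j) / real N" for j
  have c_nn: "0 \<le> c j" for j unfolding c_def by simp
  have c_sum: "(\<Sum>j<k. c j) = 1" unfolding c_def using N_eq N_pos
    by (simp add: sum_divide_distrib[symmetric])
  define Q where "Q i j = (\<Sum>s\<in>F j. \<phi> i (act s y)) / real (n j)" for i j
  define P where "P i j = (\<Sum>s\<in>F j. \<phi> i (act s (x j))) / real (n j)" for i j
  define M where "M i j = (\<integral>z. \<phi> i z \<partial>\<mu> j)" for i j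
  define A where "A i = (\<integral>z. \<phi> i z \<partial>\<alpha>)" for i
  define E where "E i = (\<integral>z. \<phi> i z \<partial>emp act Fu y)" for i
  have E_eq0: "E i = (\<Sum>s\<in>Fu. \<phi> i (act s y)) / real N" for i
    unfolding E_def N_def using finFu Fu_ne phm by (simp add: emp_integral)
  have E_eq: "E i = (\<Sum>j<k. c j * Q i j)" for i
  proof -
    have "(\<Sum>s\<in>Fu. \<phi> i (act s y)) = (\<Sum>j<k. \<Sum>s\<in>F j. \<phi> i (act s y))"
      unfolding Fu_def using F_fin F_disj by (subst sum.UNION_disjoint) auto
    then have "E i = (\<Sum>j<k. \<Sum>s\<in>F j. \<phi> i (act s y)) / real N" using E_eq0 by simp
    also have "\<dots> = (\<Sum>j<k. (\<Sum>s\<in>F j. \<phi> i (act s y)) / real N)"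
      by (rule sum_divide_distrib)
    also have "\<dots> = (\<Sum>j<k. c j * Q i j)"
    proof (rule sum.cong)
      fix j assume "j \<in> {..<k}"
      then have "0 < n j" using n_pos by simp
      then show "(\<Sum>s\<in>F j. \<phi> i (act s y)) / real N = c j * Q i j"
        unfolding c_def Q_def by (simp add: field_simps)
    qed simp
    finally show ?thesis .
  qed
  have Q01: "0 \<le> Q i j \<and> Q i j \<le> 1" if "j < k" for i j
    unfolding Q_def n_def using avg01[of "F j" "\<lambda>s. \<phi> i (act s y)"] F_fin[OF that] phi_range by simp
  have P01: "0 \<le> P i j \<and> P i j \<le> 1" if "j < k" for i j
    unfolding P_def n_def using avg01[of "F j" "\<lambda>s. \<phi> i (act s (x j))"] F_fin[OF that] phi_range by simp
  have M01: "0 \<le> M i j \<and> M i j \<le> 1" if "j < k" for i j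
    unfolding M_def using prob_int_bound[OF mu_prob[OF that] phm] phi_range by simp
  have A01: "0 \<le> A i \<and> A i \<le> 1" for i
    unfolding A_def using prob_int_bound[OF alpha_prob phm] phi_range by simp
  have E01: "0 \<le> E i \<and> E i \<le> 1" for i
    unfolding E_eq0 N_def using avg01[of Fu "\<lambda>s. \<phi> i (act s y)"] finFu Fu_ne phi_range by simp
  define T where "T i j = w i * (\<bar>Q i j - P i j\<bar> + \<bar>M i j - P i j\<bar> + \<bar>M i j - A i\<bar>)" for i j
  have pt: "\<bar>E i - A i\<bar> \<le> (\<Sum>j<k. c j * (\<bar>Q i j - P i j\<bar> + \<bar>M i j - P i j\<bar> + \<bar>M i j - A i\<bar>))" for i
  proof -
    have "E i - A i = (\<Sum>j<k. c j * (Q i j - A i))"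
      using E_eq c_sum by (simp add: right_diff_distrib sum_subtractf sum_distrib_right[symmetric])
    also have "\<bar>\<dots>\<bar> \<le> (\<Sum>j<k. \<bar>c j * (Q i j - A i)\<bar>)" by (rule sum_abs)
    also have "\<dots> \<le> (\<Sum>j<k. c j * (\<bar>Q i j - P i j\<bar> + \<bar>M i j - P i j\<bar> + \<bar>M i j - A i\<bar>))"
    proof (rule sum_mono)
      fix j
      have "\<bar>Q i j - A i\<bar> \<le> \<bar>Q i j - P i j\<bar> + \<bar>M i j - P i j\<bar> + \<bar>M i j - A i\<bar>" by linarith
      then show "\<bar>c j * (Q i j - A i)\<bar> \<le> c j * (\<bar>Q i j - P i j\<bar> + \<bar>M i j - P i j\<bar> + \<bar>M i j - A i\<bar>)"
        using c_nn[of j] by (simp add: abs_mult mult_left_mono)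
    qed
    finally show ?thesis .
  qed
  have sQP: "summable (\<lambda>i. w i * \<bar>Q i j - P i j\<bar>)" if "j < k" for j
    unfolding w_def by (rule wsum_summable[where C=1]) (use Q01[OF that] P01[OF that] in \<open>simp add: abs_diff01\<close>)
  have sMP: "summable (\<lambda>i. w i * \<bar>M i j - P i j\<bar>)" if "j < k" for j
    unfolding w_def by (rule wsum_summable[where C=1]) (use M01[OF that] P01[OF that] in \<open>simp add: abs_diff01\<close>)
  have sMA: "summable (\<lambda>i. w i * \<bar>M i j - A i\<bar>)" if "j < k" for j
    unfolding w_def by (rule wsum_summable[where C=1]) (use M01[OF that] A01 in \<open>simp add: abs_diff01\<close>)
  have T_split: "(\<lambda>i. T i j) = (\<lambda>i. (w i * \<bar>Q i j - P i j\<bar> + w i * \<bar>M i j - P i j\<bar>) + w i * \<bar>M i j - A i\<bar>)" for j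
    unfolding T_def by (simp add: distrib_left)
  have sT: "summable (\<lambda>i. T i j)" if "j < k" for j
    unfolding T_split by (intro summable_add sQP sMP sMA that)
  have rho01: "0 \<le> rho \<phi> a b \<and> rho \<phi> a b \<le> 1" for a b using rho_bounds[OF phm phi_range] .
  have Tb: "(\<Sum>i. T i j) \<le> Dm \<phi> (\<mu> j) \<alpha> + \<xi> j + \<epsilon> j + g (\<epsilon> j)" if jk: "j < k" for j
  proof -
    have eq1: "(\<Sum>i. T i j) = (\<Sum>i. w i * \<bar>Q i j - P i j\<bar>) + (\<Sum>i. w i * \<bar>M i j - P i j\<bar>) + (\<Sum>i. w i * \<bar>M i j - A i\<bar>)"
      unfolding T_split
      by (simp add: suminf_add[OF summable_add[OF sQP[OF jk] sMP[OF jk]] sMA[OF jk], symmetric]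
                    suminf_add[OF sQP[OF jk] sMP[OF jk], symmetric])
    have FP: "(\<integral>z. \<phi> i z \<partial>emp act (F j) (x j)) = P i j" for i
      unfolding P_def n_def using F_fin[OF jk] phm by (simp add: emp_integral)
    have eq2: "(\<Sum>i. w i * \<bar>M i j - P i j\<bar>) = Dm \<phi> (\<mu> j) (emp act (F j) (x j))"
      unfolding Dm_def w_def M_def FP ..
    have b2: "Dm \<phi> (\<mu> j) (emp act (F j) (x j)) < \<xi> j"
      using emp_close[OF jk] unfolding Bm_def by simp
    have eq3: "(\<Sum>i. w i * \<bar>M i j - A i\<bar>) = Dm \<phi> (\<mu> j) \<alpha>"
      unfolding Dm_def w_def M_def A_def ..
    define d where "d i s = w i * \<bar>\<phi> i (act s (x j)) - \<phi> i (act s y)\<bar>" for i s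
    have sd: "summable (\<lambda>i. d i s)" for s
      unfolding d_def w_def by (rule wsum_summable[where C=1])
        (use phi_range in \<open>simp add: abs_diff01\<close>)
    have np: "0 < real (n j)" using n_pos[OF jk] by simp
    have le1: "w i * \<bar>Q i j - P i j\<bar> \<le> (\<Sum>s\<in>F j. d i s) / real (n j)" for i
    proof -
      have "Q i j - P i j = (\<Sum>s\<in>F j. \<phi> i (act s y) - \<phi> i (act s (x j))) / real (n j)"
        unfolding Q_def P_def by (simp add: sum_subtractf diff_divide_distrib)
      then have "\<bar>Q i j - P i j\<bar> = \<bar>\<Sum>s\<in>F j. \<phi> i (act s y) - \<phi> i (act s (x j))\<bar> / real (n j)"
        using np by simp
      also have "\<dots> \<le> (\<Sum>s\<in>F j. \<bar>\<phi> i (act s (x j)) - \<phi> i (act s y)\<bar>) / real (n j)"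
        using np sum_abs[of "\<lambda>s. \<phi> i (act s y) - \<phi> i (act s (x j))" "F j"]
        by (intro divide_right_mono) (auto simp: abs_minus_commute)
      finally have "w i * \<bar>Q i j - P i j\<bar> \<le> w i * ((\<Sum>s\<in>F j. \<bar>\<phi> i (act s (x j)) - \<phi> i (act s y)\<bar>) / real (n j))"
        by (intro mult_left_mono) (auto simp: w_def)
      then show ?thesis unfolding d_def by (simp add: sum_distrib_left)
    qed
    have s_rhs: "summable (\<lambda>i. (\<Sum>s\<in>F j. d i s) / real (n j))"
      by (intro summable_divide summable_sum sd)
    have "(\<Sum>i. w i * \<bar>Q i j - P i j\<bar>) \<le> (\<Sum>i. (\<Sum>s\<in>F j. d i s) / real (n j))"
      by (rule suminf_le[OF le1 sQP[OF jk] s_rhs])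
    also have "\<dots> = (\<Sum>s\<in>F j. (\<Sum>i. d i s)) / real (n j)"
      using suminf_divide[OF summable_sum[of "F j" "\<lambda>s i. d i s"], of "real (n j)"] sd
      by (simp add: suminf_sum)
    also have "\<dots> = (\<Sum>s\<in>F j. rho \<phi> (act s (x j)) (act s y)) / real (n j)"
      unfolding d_def w_def by (simp add: rho_eq[OF phm])
    also have "\<dots> \<le> \<epsilon> j + g (\<epsilon> j)"
    proof -
      define B where "B = {s\<in>F j. rho \<phi> (act s (x j)) (act s y) > \<epsilon> j}"
      have cB: "real (card B) \<le> g (\<epsilon> j) * real (n j)"
        using y_in jk unfolding B_def n_def Bg_def by auto
      have "(\<Sum>s\<in>F j. rho \<phi> (act s (x j)) (act s y)) \<le> (\<Sum>s\<in>F j. \<epsilon> j + (if s \<in> B then 1 else 0))"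
      proof (rule sum_mono)
        fix s assume "s \<in> F j"
        then show "rho \<phi> (act s (x j)) (act s y) \<le> \<epsilon> j + (if s \<in> B then 1 else 0)"
          using rho01[of "act s (x j)" "act s y"] eps[OF jk] unfolding B_def by auto
      qed
      also have "\<dots> = real (n j) * \<epsilon> j + real (card B)"
        using F_fin[OF jk] unfolding n_def B_def
        by (simp add: sum.distrib sum.If_cases Int_def)
      also have "\<dots> \<le> real (n j) * (\<epsilon> j + g (\<epsilon> j))"
        using cB by (simp add: algebra_simps)
      finally show ?thesis using np by (simp add: divide_le_eq mult.commute)
    qed
    finally show ?thesis using eq1 eq2 b2 eq3 by linarith
  qed
  have "Dm \<phi> (emp act Fu y) \<alpha> = (\<Sum>i. w i * \<bar>E i - A i\<bar>)"
    unfolding Dm_def w_def E_def A_def ..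
  also have "\<dots> \<le> (\<Sum>i. \<Sum>j<k. c j * T i j)"
  proof (rule suminf_le)
    fix i
    show "w i * \<bar>E i - A i\<bar> \<le> (\<Sum>j<k. c j * T i j)"
      using mult_left_mono[OF pt[of i], of "w i"]
      by (simp add: w_def T_def sum_distrib_left algebra_simps)
    show "summable (\<lambda>i. w i * \<bar>E i - A i\<bar>)"
      unfolding w_def by (rule wsum_summable[where C=1]) (use E01 A01 in \<open>simp add: abs_diff01\<close>)
    show "summable (\<lambda>i. \<Sum>j<k. c j * T i j)"
      by (intro summable_sum summable_mult sT) auto
  qed
  also have "\<dots> = (\<Sum>j<k. c j * (\<Sum>i. T i j))"
  proof -
    have "(\<Sum>i. \<Sum>j<k. c j * T i j) = (\<Sum>j<k. \<Sum>i. c j * T i j)"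
      by (rule suminf_sum) (auto intro: summable_mult sT)
    also have "\<dots> = (\<Sum>j<k. c j * (\<Sum>i. T i j))"
      by (rule sum.cong) (auto simp: suminf_mult sT)
    finally show ?thesis .
  qed
  also have "\<dots> \<le> (\<Sum>j<k. c j * (Dm \<phi> (\<mu> j) \<alpha> + \<xi> j + \<epsilon> j + g (\<epsilon> j)))"
    by (rule sum_mono) (use Tb c_nn in \<open>auto intro: mult_left_mono\<close>)
  finally show ?thesis unfolding c_def n_def N_def Fu_def .
qed

end
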